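(* Let $\alpha\in(0,1)$ and $n\in\mathbb{N}$, and let $G$ be a graph on $n$ vertices with $\delta(G)\geq \alpha n$. If $u,v$ are vertices of $G$ such that there exists a walk of even length between $u$ and $v$, then there exists a walk of even length at most $4/\alpha$ between $u$ and $v$.
   Context: Graphs are finite and simple; $\delta(G)$ is the minimum degree. The length of a walk is its number of edges. *)

theory Defs
  imports Main "HOL-Library.Sublist" Complex_Main
begin

definition simple_graph :: "'a set \<Rightarrow> ('a \<Rightarrow> 'a \<Rightarrow> bool) \<Rightarrow> bool" where
  "simple_graph V E \<longleftrightarrow> finite V \<and> (\<forall>x y. E x y \<longrightarrow> x \<in> V \<and> y \<in> V)
     \<and> (\<forall>x y. E x y \<longrightarrow> E y x) \<and> (\<forall>x. \<not> E x x)"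

definition degree :: "'a set \<Rightarrow> ('a \<Rightarrow> 'a \<Rightarrow> bool) \<Rightarrow> 'a \<Rightarrow> nat" where
  "degree V E x = card {y \<in> V. E x y}"

definition is_walk :: "'a set \<Rightarrow> ('a \<Rightarrow> 'a \<Rightarrow> bool) \<Rightarrow> 'a list \<Rightarrow> bool" where
  "is_walk V E w \<longleftrightarrow> w \<noteq> [] \<and> set w \<subseteq> V \<and> (\<forall>i. Suc i < length w \<longrightarrow> E (w ! i) (w ! Suc i))"

definition walk_length :: "'a list \<Rightarrow> nat" where
  "walk_length w = length w - 1"

definition walk_between :: "'a set \<Rightarrow> ('a \<Rightarrow> 'a \<Rightarrow> bool) \<Rightarrow> 'a \<Rightarrow> 'a \<Rightarrow> 'a list \<Rightarrow> bool" where
  "walk_between V E u v w \<longleftrightarrow> is_walk V E w \<and> hd w = u \<and> last w = v"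

end

theory Submission
  imports Defs
begin

lemma succ_nth: "(\<forall>i. Suc i < length w \<longrightarrow> E (w!i) (w!Suc i)) \<longleftrightarrow> successively E w"
proof (induction E w rule: successively.induct)
  case (3 E x y xs)
  have "(\<forall>i. Suc i < length (x#y#xs) \<longrightarrow> E ((x#y#xs)!i) ((x#y#xs)!Suc i))
     \<longleftrightarrow> E x y \<and> (\<forall>i. Suc i < length (y#xs) \<longrightarrow> E ((y#xs)!i) ((y#xs)!Suc i))"
  proof
    assume H: "\<forall>i. Suc i < length (x#y#xs) \<longrightarrow> E ((x#y#xs)!i) ((x#y#xs)!Suc i)"
    show "E x y \<and> (\<forall>i. Suc i < length (y#xs) \<longrightarrow> E ((y#xs)!i) ((y#xs)!Suc i))"
    proof
      show "E x y" using H[rule_format, of 0] by simp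
      show "\<forall>i. Suc i < length (y#xs) \<longrightarrow> E ((y#xs)!i) ((y#xs)!Suc i)"
      proof (intro allI impI)
        fix i assume "Suc i < length (y#xs)"
        then show "E ((y#xs)!i) ((y#xs)!Suc i)" using H[rule_format, of "Suc i"] by simp
      qed
    qed
  next
    assume H: "E x y \<and> (\<forall>i. Suc i < length (y#xs) \<longrightarrow> E ((y#xs)!i) ((y#xs)!Suc i))"
    show "\<forall>i. Suc i < length (x#y#xs) \<longrightarrow> E ((x#y#xs)!i) ((x#y#xs)!Suc i)"
    proof (intro allI impI)
      fix i assume "Suc i < length (x#y#xs)"
      then show "E ((x#y#xs)!i) ((x#y#xs)!Suc i)" using H
        by (cases i) auto
    qed
  qed
  then show ?case using 3 by simp
qed auto

lemma shortcut:
  assumes wb: "walk_between V E u v w" and ij: "i < j" "j < length w"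
    and y: "y \<in> V" "E (w!i) y" "E y (w!j)"
  shows "walk_between V E u v (take (Suc i) w @ y # drop j w)"
    and "length (take (Suc i) w @ y # drop j w) = Suc i + 1 + (length w - j)"
proof -
  have w: "w \<noteq> []" "set w \<subseteq> V" "successively E w" "hd w = u" "last w = v"
    using wb unfolding walk_between_def is_walk_def succ_nth by auto
  have sw: "successively E (take (Suc i) w) \<and> successively E (drop j w)"
    using w(3) successively_append_iff[of E "take (Suc i) w" "drop (Suc i) w"]
      successively_append_iff[of E "take j w" "drop j w"] by simp
  have lt: "last (take (Suc i) w) = w!i" using ij
    by (simp add: take_Suc_conv_app_nth)
  have hd: "hd (drop j w) = w!j" using ij by (simp add: hd_drop_conv_nth)
  have dne: "drop j w \<noteq> []" using ij by simp
  have "successively E (take (Suc i) w @ y # drop j w)"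
    using sw y lt hd dne
    by (auto simp: successively_append_iff successively_Cons)
  moreover have "set (take (Suc i) w @ y # drop j w) \<subseteq> V"
    using w(2) y(1) set_take_subset[of "Suc i" w] set_drop_subset[of j w] by auto
  moreover have "hd (take (Suc i) w @ y # drop j w) = u"
    using w ij by (cases w) auto
  moreover have "last (take (Suc i) w @ y # drop j w) = v"
    using w dne by (simp add: last_drop)
  ultimately show "walk_between V E u v (take (Suc i) w @ y # drop j w)"
    unfolding walk_between_def is_walk_def succ_nth by simp
  show "length (take (Suc i) w @ y # drop j w) = Suc i + 1 + (length w - j)"
    using ij by simp
qed

theorem proposition4p5:
  fixes V :: "'a set" and E :: "'a \<Rightarrow> 'a \<Rightarrow> bool" and \<alpha> :: real and n :: nat
    and u v :: 'a
  assumes "0 < \<alpha>" and "\<alpha> < 1"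
    and "simple_graph V E" and "card V = n"
    and "\<forall>x\<in>V. real (degree V E x) \<ge> \<alpha> * real n"
    and "u \<in> V" and "v \<in> V"
    and "\<exists>w. walk_between V E u v w \<and> even (walk_length w)"
  shows "\<exists>w. walk_between V E u v w \<and> even (walk_length w)
           \<and> real (walk_length w) \<le> 4 / \<alpha>"
proof -
  define P where "P k \<longleftrightarrow> (\<exists>w. walk_between V E u v w \<and> even (walk_length w) \<and> walk_length w = k)" for k
  have ex: "\<exists>k. P k" using assms(8) unfolding P_def by blast
  define L where "L = (LEAST k. P k)"
  have PL: "P L" unfolding L_def using ex by (rule LeastI_ex)
  have minL: "\<And>k. k < L \<Longrightarrow> \<not> P k" unfolding L_def using not_less_Least by blast
  obtain w where w: "walk_between V E u v w" "even (walk_length w)" "walk_length w = L"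
    using PL unfolding P_def by blast
  have wne: "w \<noteq> []" and wV: "set w \<subseteq> V" using w(1) unfolding walk_between_def is_walk_def by auto
  have lenw: "length w = Suc L" using w(3) wne unfolding walk_length_def by (cases w) auto
  have fin: "finite V" using assms(3) unfolding simple_graph_def by auto
  have sym: "\<And>x y. E x y \<Longrightarrow> E y x" using assms(3) unfolding simple_graph_def by auto
  show ?thesis
  proof (rule ccontr)
    assume nt: "\<not> ?thesis"
    have big: "real L > 4 / \<alpha>" using nt w by force
    define m where "m = L div 4"
    define N where "N i = {y \<in> V. E (w!(4*i)) y}" for i
    have disj: "N i \<inter> N j = {}" if "i \<le> m" "j \<le> m" "i < j" for i j
    proof (rule ccontr)
      assume "N i \<inter> N j \<noteq> {}"
      then obtain y where y: "y \<in> V" "E (w!(4*i)) y" "E (w!(4*j)) y" unfolding N_def by auto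
      have ij: "4*i < 4*j" "4*j < length w" using that lenw unfolding m_def by auto
      note s = shortcut[OF w(1) ij y(1,2) sym[OF y(3)]]
      let ?w = "take (Suc (4*i)) w @ y # drop (4*j) w"
      have "walk_length ?w = 4*i + 2 + (L - 4*j)" using s(2) lenw ij unfolding walk_length_def by simp
      moreover have "4*i + 2 + (L - 4*j) < L" using ij lenw by simp
      moreover have "even (4*i + 2 + (L - 4*j))" using w(2,3) ij lenw by auto
      ultimately have "P (4*i + 2 + (L - 4*j))" unfolding P_def using s(1) by auto
      then show False using minL \<open>4*i + 2 + (L - 4*j) < L\<close> by blast
    qed
    have cardN: "real (card (N i)) \<ge> \<alpha> * real n" if "i \<le> m" for i
    proof -
      have "4*i < length w" using that lenw unfolding m_def by auto
      then have "w!(4*i) \<in> V" using wV by auto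
      then show ?thesis using assms(5) unfolding N_def degree_def by auto
    qed
    have "card (\<Union>(N ` {..m})) = (\<Sum>i\<le>m. card (N i))"
    proof (rule card_UN_disjoint)
      show "finite {..m}" by simp
      show "\<forall>i\<in>{..m}. finite (N i)" using fin unfolding N_def by simp
      show "\<forall>i\<in>{..m}. \<forall>j\<in>{..m}. i \<noteq> j \<longrightarrow> N i \<inter> N j = {}"
      proof (intro ballI impI)
        fix i j assume "i \<in> {..m}" "j \<in> {..m}" "i \<noteq> j"
        then show "N i \<inter> N j = {}"
          using disj[of i j] disj[of j i] by (cases "i < j") (auto simp: Int_commute)
      qed
    qed
    moreover have "card (\<Union>(N ` {..m})) \<le> n"
    proof -
      have "\<Union>(N ` {..m}) \<subseteq> V" by (auto simp: N_def)
      then show ?thesis using card_mono[OF fin] assms(4) by blast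
    qed
    ultimately have "real (\<Sum>i\<le>m. card (N i)) \<le> real n" by (simp only: of_nat_le_iff)
    moreover have "(\<Sum>i\<le>m. \<alpha> * real n) \<le> real (\<Sum>i\<le>m. card (N i))"
      unfolding of_nat_sum by (rule sum_mono) (use cardN in auto)
    ultimately have "real (Suc m) * (\<alpha> * real n) \<le> real n" by simp
    moreover have "n > 0" using assms(4,6) fin card_gt_0_iff by blast
    ultimately have "real (Suc m) * \<alpha> \<le> 1" by (simp add: mult.assoc[symmetric])
    then have "real (Suc m) \<le> 1 / \<alpha>" using assms(1) by (simp add: field_simps)
    moreover have "real L < 4 * real (Suc m)"
    proof -
      have "L < 4 * Suc m" unfolding m_def by simp
      then show ?thesis by linarith
    qed
    ultimately have "real L < 4 / \<alpha>" by simp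
    then show False using big by simp
  qed
qed

end
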